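(* Let $X$ be a $T_0$ space. The following are equivalent: (1) $X$ is $QI_2$-continuous. (2) For every $x\in X$ there exists an irreducible subset $\mathcal F$ of $P_S(X)$ with $\mathcal F\subseteq w(x)$ and $\uparrow x=\bigcap\mathcal F$.
   Context: For a $T_0$ space $X$, the specialization order is $x\le y$ iff $x\in \mathrm{cl}\{y\}$; $\uparrow A=\{x: a\le x\text{ for some } a\in A\}$, $\uparrow x=\uparrow\{x\}$; $A^\uparrow$, $A^\downarrow$ are the sets of upper and lower bounds of $A$, and $A^\delta=(A^\uparrow)^\downarrow$. A nonempty subset $A$ of a space is irreducible if whenever $A\subseteq F_1\cup F_2$ with $F_1,F_2$ closed, $A\subseteq F_1$ or $A\subseteq F_2$. $X^{(<\omega)}$ is the set of nonempty finite subsets of $X$. $P_S(X)$ is the set of nonempty compact saturated (upper) subsets of $X$ with the upper Vietoris topology, basis $\{\square U: U\text{ open}\}$, $\square U=\{Q: Q\subseteq U\}$. For $A\subseteq X$, $x\in X$, $A\ll_{I_2}x$ means: for every irreducible $D\subseteq X$ with $x\in D^\delta$, $A\cap\mathrm{cl}D\ne\emptyset$. For $x\in X$, $w(x)=\{\uparrow F: F\in X^{(<\omega)}, F\ll_{I_2}x\}$. $X$ is $QI_2$-continuous if for every $x\in X$, $w(x)$ is an irreducible subset of $P_S(X)$ and $\uparrow x=\bigcap w(x)$. *)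

theory Defs
  imports "HOL-Analysis.Analysis"
begin

definition spec_le :: "'a topology \<Rightarrow> 'a \<Rightarrow> 'a \<Rightarrow> bool" where
  "spec_le X x y \<longleftrightarrow> x \<in> topspace X \<and> y \<in> topspace X \<and> x \<in> X closure_of {y}"

definition up_set :: "'a topology \<Rightarrow> 'a set \<Rightarrow> 'a set" where
  "up_set X A = {x \<in> topspace X. \<exists>a\<in>A. spec_le X a x}"

definition upper_bounds :: "'a topology \<Rightarrow> 'a set \<Rightarrow> 'a set" where
  "upper_bounds X A = {y \<in> topspace X. \<forall>a\<in>A. spec_le X a y}"

definition lower_bounds :: "'a topology \<Rightarrow> 'a set \<Rightarrow> 'a set" where
  "lower_bounds X A = {y \<in> topspace X. \<forall>a\<in>A. spec_le X y a}"

definition delta_cut :: "'a topology \<Rightarrow> 'a set \<Rightarrow> 'a set" where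
  "delta_cut X A = lower_bounds X (upper_bounds X A)"

definition irreducible_in :: "'a topology \<Rightarrow> 'a set \<Rightarrow> bool" where
  "irreducible_in X A \<longleftrightarrow> A \<noteq> {} \<and> A \<subseteq> topspace X \<and>
     (\<forall>F1 F2. closedin X F1 \<and> closedin X F2 \<and> A \<subseteq> F1 \<union> F2 \<longrightarrow> A \<subseteq> F1 \<or> A \<subseteq> F2)"

definition PS_carrier :: "'a topology \<Rightarrow> 'a set set" where
  "PS_carrier X = {Q. Q \<noteq> {} \<and> compactin X Q \<and> up_set X Q = Q}"

definition box :: "'a topology \<Rightarrow> 'a set \<Rightarrow> 'a set set" where
  "box X U = {Q \<in> PS_carrier X. Q \<subseteq> U}"

definition PS :: "'a topology \<Rightarrow> 'a set topology" where
  "PS X = topology_generated_by {box X U | U. openin X U}"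

definition way_below_I2 :: "'a topology \<Rightarrow> 'a set \<Rightarrow> 'a \<Rightarrow> bool" where
  "way_below_I2 X A x \<longleftrightarrow>
     (\<forall>D. irreducible_in X D \<and> x \<in> delta_cut X D \<longrightarrow> A \<inter> X closure_of D \<noteq> {})"

definition w_set :: "'a topology \<Rightarrow> 'a \<Rightarrow> 'a set set" where
  "w_set X x = {up_set X F | F. finite F \<and> F \<noteq> {} \<and> F \<subseteq> topspace X \<and> way_below_I2 X F x}"

definition QI2_continuous :: "'a topology \<Rightarrow> bool" where
  "QI2_continuous X \<longleftrightarrow> (\<forall>x\<in>topspace X.
     irreducible_in (PS X) (w_set X x) \<and> up_set X {x} = \<Inter>(w_set X x))"

end

theory Submission
  imports Defs
begin

lemma spec_open_up:
  assumes "openin X U" "a \<in> U" "spec_le X a y" shows "y \<in> U"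
  using assms unfolding spec_le_def in_closure_of by blast

lemma spec_trans:
  assumes "spec_le X a b" "spec_le X b c" shows "spec_le X a c"
proof -
  have "X closure_of {b} \<subseteq> X closure_of (X closure_of {c})"
    using assms(2) unfolding spec_le_def by (intro closure_of_mono) auto
  then show ?thesis using assms unfolding spec_le_def by auto
qed

lemma spec_refl: "a \<in> topspace X \<Longrightarrow> spec_le X a a"
  unfolding spec_le_def using closure_of_subset[of "{a}" X] by auto

lemma up_set_idem: "up_set X (up_set X F) = up_set X F"
proof
  show "up_set X (up_set X F) \<subseteq> up_set X F"
  proof
    fix y assume "y \<in> up_set X (up_set X F)"
    then obtain b where b: "b \<in> up_set X F" "spec_le X b y" "y \<in> topspace X"
      unfolding up_set_def by blast
    then obtain a where a: "a \<in> F" "spec_le X a b" unfolding up_set_def by blast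
    have "spec_le X a y" by (rule spec_trans[OF a(2) b(2)])
    then show "y \<in> up_set X F" using a(1) b(3) unfolding up_set_def by blast
  qed
  show "up_set X F \<subseteq> up_set X (up_set X F)"
  proof
    fix y assume y: "y \<in> up_set X F"
    then have "y \<in> topspace X" unfolding up_set_def by blast
    then have "spec_le X y y" by (rule spec_refl)
    then show "y \<in> up_set X (up_set X F)" using y \<open>y \<in> topspace X\<close> unfolding up_set_def by blast
  qed
qed

lemma up_set_sub:
  assumes "F \<subseteq> topspace X" shows "F \<subseteq> up_set X F"
proof
  fix a assume a: "a \<in> F"
  then have t: "a \<in> topspace X" using assms by blast
  then have "spec_le X a a" by (rule spec_refl)
  then show "a \<in> up_set X F" using a t unfolding up_set_def by blast
qed

lemma compact_up_finite:
  assumes "finite F" "F \<subseteq> topspace X" shows "compactin X (up_set X F)"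
  unfolding compactin_def
proof (intro conjI allI impI)
  show "up_set X F \<subseteq> topspace X" unfolding up_set_def by auto
  fix \<U> assume H: "(\<forall>x\<in>\<U>. openin X x) \<and> up_set X F \<subseteq> \<Union>\<U>"
  have FU: "F \<subseteq> \<Union>\<U>" using H up_set_sub[OF assms(2)] by (meson order_trans)
  have "\<exists>V. V \<in> \<U> \<and> a \<in> V" if "a \<in> F" for a
    using FU that by (meson UnionE subsetD)
  then obtain f where f: "\<And>a. a \<in> F \<Longrightarrow> f a \<in> \<U> \<and> a \<in> f a" by metis
  have "up_set X F \<subseteq> \<Union>(f ` F)"
  proof
    fix y assume "y \<in> up_set X F"
    then obtain a where a: "a \<in> F" "spec_le X a y" unfolding up_set_def by auto
    have "openin X (f a)" using f[OF a(1)] H by blast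
    then have "y \<in> f a" using spec_open_up[of X "f a" a y] f[OF a(1)] a(2) by blast
    then show "y \<in> \<Union>(f ` F)" using a(1) by blast
  qed
  moreover have "f ` F \<subseteq> \<U>" using f by blast
  ultimately show "\<exists>F'. finite F' \<and> F' \<subseteq> \<U> \<and> up_set X F \<subseteq> \<Union>F'"
    using assms(1) by blast
qed

lemma up_PS:
  assumes "finite F" "F \<noteq> {}" "F \<subseteq> topspace X" shows "up_set X F \<in> PS_carrier X"
proof -
  have "up_set X F \<noteq> {}" using up_set_sub[OF assms(3)] assms(2) by blast
  then show ?thesis unfolding PS_carrier_def
    using compact_up_finite[OF assms(1,3)] up_set_idem[of X F] by blast
qed

lemma topspace_PS: "topspace (PS X) = PS_carrier X"
proof -
  have "topspace (PS X) = \<Union>{box X U | U. openin X U}" unfolding PS_def by simp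
  also have "\<dots> = PS_carrier X"
  proof
    show "\<Union>{box X U | U. openin X U} \<subseteq> PS_carrier X" unfolding box_def by auto
    show "PS_carrier X \<subseteq> \<Union>{box X U | U. openin X U}"
    proof
      fix Q assume "Q \<in> PS_carrier X"
      then have "Q \<in> box X (topspace X)"
        unfolding box_def PS_carrier_def using compactin_subset_topspace by auto
      then show "Q \<in> \<Union>{box X U | U. openin X U}" by blast
    qed
  qed
  finally show ?thesis .
qed

lemma box_open: "openin X U \<Longrightarrow> openin (PS X) (box X U)"
  unfolding PS_def by (rule topology_generated_by_Basis) blast

lemma PS_basis:
  assumes "openin (PS X) V" "Q \<in> V"
  shows "\<exists>U. openin X U \<and> Q \<in> box X U \<and> box X U \<subseteq> V"
proof -
  have "generate_topology_on {box X U | U. openin X U} V"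
    using assms(1) unfolding PS_def by (rule openin_topology_generated_by)
  then have "\<forall>Q\<in>V. \<exists>U. openin X U \<and> Q \<in> box X U \<and> box X U \<subseteq> V"
  proof (induction rule: generate_topology_on.induct)
    case Empty then show ?case by simp
  next
    case (Int a b)
    show ?case
    proof
      fix Q assume Qab: "Q \<in> a \<inter> b"
      obtain U1 where "openin X U1" "Q \<in> box X U1" "box X U1 \<subseteq> a"
        using Int.IH(1) Qab by (meson IntD1)
      moreover obtain U2 where "openin X U2" "Q \<in> box X U2" "box X U2 \<subseteq> b"
        using Int.IH(2) Qab by (meson IntD2)
      moreover have "box X (U1 \<inter> U2) = box X U1 \<inter> box X U2" unfolding box_def by auto
      ultimately have "openin X (U1 \<inter> U2)" "Q \<in> box X (U1 \<inter> U2)" "box X (U1 \<inter> U2) \<subseteq> a \<inter> b"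
        by auto
      then show "\<exists>U. openin X U \<and> Q \<in> box X U \<and> box X U \<subseteq> a \<inter> b"
        by blast
    qed
  next
    case (UN K)
    show ?case
    proof
      fix Q assume "Q \<in> \<Union>K"
      then obtain k where k: "k \<in> K" "Q \<in> k" by blast
      then obtain U where "openin X U" "Q \<in> box X U" "box X U \<subseteq> k" using UN.IH by blast
      moreover have "k \<subseteq> \<Union>K" using k(1) by blast
      ultimately have "openin X U" "Q \<in> box X U" "box X U \<subseteq> \<Union>K" by auto
      then show "\<exists>U. openin X U \<and> Q \<in> box X U \<and> box X U \<subseteq> \<Union>K" by blast
    qed
  next
    case (Basis s)
    then obtain U where "s = box X U" "openin X U" by blast
    then show ?case by blast
  qed
  then show ?thesis using assms(2) by blast
qed

lemma irr_open:
  assumes "irreducible_in T S" "openin T V1" "openin T V2" "S \<inter> V1 \<noteq> {}" "S \<inter> V2 \<noteq> {}"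
  shows "S \<inter> V1 \<inter> V2 \<noteq> {}"
proof
  assume e: "S \<inter> V1 \<inter> V2 = {}"
  have c1: "closedin T (topspace T - V1)" using assms(2) by (rule closedin_diff[OF closedin_topspace])
  have c2: "closedin T (topspace T - V2)" using assms(3) by (rule closedin_diff[OF closedin_topspace])
  have St: "S \<subseteq> topspace T" using assms(1) unfolding irreducible_in_def by blast
  have "S \<subseteq> (topspace T - V1) \<union> (topspace T - V2)"
    using e St by blast
  then have "S \<subseteq> topspace T - V1 \<or> S \<subseteq> topspace T - V2"
    using assms(1) c1 c2 unfolding irreducible_in_def by blast
  then show False using assms(4,5) by blast
qed

lemma finite_chain_max:
  assumes "finite F" "F \<noteq> {}" "subset.chain \<O> C" "F \<subseteq> C"
  shows "\<Union>F \<in> F"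
proof -
  have ch: "\<And>x y. x \<in> C \<Longrightarrow> y \<in> C \<Longrightarrow> x \<subseteq> y \<or> y \<subseteq> x"
    using assms(3) unfolding subset.chain_def by blast
  have "F \<subseteq> C \<longrightarrow> \<Union>F \<in> F" using assms(1,2)
  proof (induction F rule: finite_ne_induct)
    case (singleton x) then show ?case by simp
  next
    case (insert x F)
    show ?case
    proof
      assume xF: "insert x F \<subseteq> C"
      then have u: "\<Union>F \<in> F" using insert.IH by blast
      have "x \<in> C" "\<Union>F \<in> C" using xF u by blast+
      then have "x \<subseteq> \<Union>F \<or> \<Union>F \<subseteq> x" using ch by blast
      moreover have "\<Union>(insert x F) = x \<union> \<Union>F" by simp
      ultimately show "\<Union>(insert x F) \<in> insert x F" using u
        by (metis Un_absorb1 Un_absorb2 insertCI)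
    qed
  qed
  then show ?thesis using assms(4) by blast
qed

lemma rudin:
  assumes irr: "irreducible_in (PS X) \<A>" and A: "closedin X A"
    and meet: "\<And>K. K \<in> \<A> \<Longrightarrow> K \<inter> A \<noteq> {}"
  shows "\<exists>C. closedin X C \<and> C \<subseteq> A \<and> (\<forall>K\<in>\<A>. C \<inter> K \<noteq> {}) \<and> irreducible_in X C"
proof -
  have AP: "\<A> \<subseteq> PS_carrier X" using irr unfolding irreducible_in_def topspace_PS by blast
  have Kc: "compactin X K" "K \<subseteq> topspace X" "K \<noteq> {}" if "K \<in> \<A>" for K
    using AP that compactin_subset_topspace unfolding PS_carrier_def by auto
  define \<O> where "\<O> = {V. openin X V \<and> topspace X - A \<subseteq> V \<and> (\<forall>K\<in>\<A>. \<not> K \<subseteq> V)}"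
  have "\<exists>M\<in>\<O>. \<forall>Y\<in>\<O>. M \<subseteq> Y \<longrightarrow> Y = M"
  proof (rule subset_Zorn_nonempty)
    show "\<O> \<noteq> {}"
    proof -
      have "\<not> K \<subseteq> topspace X - A" if "K \<in> \<A>" for K
        using meet[OF that] by blast
      then have "topspace X - A \<in> \<O>" unfolding \<O>_def using A by auto
      then show ?thesis by blast
    qed
  next
    fix C assume C: "C \<noteq> {}" "subset.chain \<O> C"
    have CO: "C \<subseteq> \<O>" using C unfolding subset.chain_def by auto
    have "openin X (\<Union>C)" using CO unfolding \<O>_def by auto
    moreover have "topspace X - A \<subseteq> \<Union>C" using CO C(1) unfolding \<O>_def by auto
    moreover have "\<not> K \<subseteq> \<Union>C" if K: "K \<in> \<A>" for K
    proof
      assume "K \<subseteq> \<Union>C"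
      moreover have "\<forall>V\<in>C. openin X V" using CO unfolding \<O>_def by auto
      ultimately obtain F where F: "finite F" "F \<subseteq> C" "K \<subseteq> \<Union>F"
        using Kc(1)[OF K] unfolding compactin_def by meson
      then have "F \<noteq> {}" using Kc(3)[OF K] by auto
      then have "\<Union>F \<in> C" using finite_chain_max[OF F(1) _ C(2) F(2)] F(2) by blast
      then show False using CO K F(3) unfolding \<O>_def by blast
    qed
    ultimately show "\<Union>C \<in> \<O>" unfolding \<O>_def by blast
  qed
  then obtain V where V: "V \<in> \<O>" and maxV: "\<And>Y. Y \<in> \<O> \<Longrightarrow> V \<subseteq> Y \<Longrightarrow> Y = V" by blast
  define C where "C = topspace X - V"
  have Vo: "openin X V" "topspace X - A \<subseteq> V" "\<And>K. K \<in> \<A> \<Longrightarrow> \<not> K \<subseteq> V"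
    using V unfolding \<O>_def by auto
  have cl: "closedin X C" unfolding C_def using Vo by auto
  have sub: "C \<subseteq> A" unfolding C_def using Vo A closedin_subset by auto
  have mK: "\<forall>K\<in>\<A>. C \<inter> K \<noteq> {}" unfolding C_def using Vo Kc by blast
  have "irreducible_in X C"
    unfolding irreducible_in_def
  proof (intro conjI allI impI)
    obtain K where "K \<in> \<A>" using irr unfolding irreducible_in_def by blast
    then show "C \<noteq> {}" using mK by blast
    show "C \<subseteq> topspace X" unfolding C_def by auto
    fix F1 F2 assume H: "closedin X F1 \<and> closedin X F2 \<and> C \<subseteq> F1 \<union> F2"
    show "C \<subseteq> F1 \<or> C \<subseteq> F2"
    proof (rule ccontr)
      assume nn: "\<not> (C \<subseteq> F1 \<or> C \<subseteq> F2)"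
      have ex: "\<exists>K\<in>\<A>. K \<subseteq> V \<union> (topspace X - Fi)" if Fi: "closedin X Fi" "\<not> C \<subseteq> Fi" for Fi
      proof (rule ccontr)
        assume "\<not> ?thesis"
        then have "V \<union> (topspace X - Fi) \<in> \<O>" unfolding \<O>_def using Vo Fi by auto
        then have "V \<union> (topspace X - Fi) = V" using maxV by blast
        then show False using Fi unfolding C_def by blast
      qed
      obtain K1 where K1: "K1 \<in> \<A>" "K1 \<subseteq> V \<union> (topspace X - F1)" using ex H nn by blast
      obtain K2 where K2: "K2 \<in> \<A>" "K2 \<subseteq> V \<union> (topspace X - F2)" using ex H nn by blast
      have o1: "openin X (V \<union> (topspace X - F1))" "openin X (V \<union> (topspace X - F2))"
        using H Vo by auto
      have "\<A> \<inter> box X (V \<union> (topspace X - F1)) \<inter> box X (V \<union> (topspace X - F2)) \<noteq> {}"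
        apply (rule irr_open[OF irr box_open[OF o1(1)] box_open[OF o1(2)]])
        using K1 K2 AP unfolding box_def by auto
      then obtain K where K: "K \<in> \<A>" "K \<subseteq> V \<union> (topspace X - F1)" "K \<subseteq> V \<union> (topspace X - F2)"
        unfolding box_def by auto
      then have "K \<subseteq> V" using H unfolding C_def by auto
      then show False using Vo K by blast
    qed
  qed
  then show ?thesis using cl sub mK by blast
qed

lemma up_mem:
  assumes "G \<in> PS_carrier X" "c \<in> G" "spec_le X c y" "y \<in> topspace X"
  shows "y \<in> G"
proof -
  have "y \<in> up_set X G" using assms(2,3,4) unfolding up_set_def by blast
  moreover have "up_set X G = G" using assms(1) by (simp add: PS_carrier_def)
  ultimately show ?thesis by simp
qed

theorem proposition4p5:
  fixes X :: "'a topology"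
  assumes "t0_space X"
  shows "QI2_continuous X \<longleftrightarrow>
    (\<forall>x\<in>topspace X. \<exists>\<F>. irreducible_in (PS X) \<F> \<and> \<F> \<subseteq> w_set X x \<and>
        up_set X {x} = \<Inter>\<F>)"
proof
  assume "QI2_continuous X"
  then show "\<forall>x\<in>topspace X. \<exists>\<F>. irreducible_in (PS X) \<F> \<and> \<F> \<subseteq> w_set X x \<and>
        up_set X {x} = \<Inter>\<F>" unfolding QI2_continuous_def by blast
next
  assume R: "\<forall>x\<in>topspace X. \<exists>\<F>. irreducible_in (PS X) \<F> \<and> \<F> \<subseteq> w_set X x \<and>
        up_set X {x} = \<Inter>\<F>"
  show "QI2_continuous X" unfolding QI2_continuous_def
  proof
    fix x assume x: "x \<in> topspace X"
    obtain \<F> where F: "irreducible_in (PS X) \<F>" "\<F> \<subseteq> w_set X x" "up_set X {x} = \<Inter>\<F>"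
      using R x by blast
    have FP: "\<F> \<subseteq> PS_carrier X" using F(1) unfolding irreducible_in_def topspace_PS by blast
    have wP: "w_set X x \<subseteq> PS_carrier X" unfolding w_set_def using up_PS by blast
    have x_in: "x \<in> up_set X F0" if "F0 \<subseteq> topspace X" "way_below_I2 X F0 x" for F0
    proof -
      have "irreducible_in X {x}" using x unfolding irreducible_in_def by auto
      moreover have "x \<in> delta_cut X {x}"
        using x unfolding delta_cut_def lower_bounds_def upper_bounds_def by auto
      ultimately have "F0 \<inter> X closure_of {x} \<noteq> {}" using that(2) unfolding way_below_I2_def by simp
      then obtain a where "a \<in> F0" "a \<in> X closure_of {x}" by blast
      then show ?thesis using that x unfolding up_set_def spec_le_def by auto
    qed
    have up_sub: "up_set X {x} \<subseteq> \<Inter>(w_set X x)"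
    proof
      fix y assume y: "y \<in> up_set X {x}"
      show "y \<in> \<Inter>(w_set X x)"
      proof
        fix Q assume "Q \<in> w_set X x"
        then obtain F0 where Q: "Q = up_set X F0" "F0 \<subseteq> topspace X" "way_below_I2 X F0 x"
          unfolding w_set_def by blast
        then have "x \<in> Q" using x_in by blast
        then obtain a where a: "a \<in> F0" "spec_le X a x" using Q unfolding up_set_def by auto
        have xy: "spec_le X x y" using y unfolding up_set_def by auto
        have ay: "spec_le X a y" by (rule spec_trans[OF a(2) xy])
        have yt: "y \<in> topspace X" using xy unfolding spec_le_def by blast
        have "y \<in> up_set X F0" unfolding up_set_def using a(1) ay yt by blast
        then show "y \<in> Q" using Q(1) by simp
      qed
    qed
    have Fne: "\<F> \<noteq> {}" using F(1) unfolding irreducible_in_def by auto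
    have "\<Inter>(w_set X x) \<subseteq> \<Inter>\<F>" using F(2) by blast
    then have eq: "up_set X {x} = \<Inter>(w_set X x)" using up_sub F(3) by blast
    have key: "\<exists>G\<in>\<F>. G \<subseteq> U" if Q: "Q \<in> w_set X x" "Q \<subseteq> U" "openin X U" for Q U
    proof (rule ccontr)
      assume nG: "\<not> ?thesis"
      obtain F0 where F0: "Q = up_set X F0" "F0 \<subseteq> topspace X" "way_below_I2 X F0 x"
        using Q(1) unfolding w_set_def by blast
      have "K \<inter> (topspace X - U) \<noteq> {}" if K: "K \<in> \<F>" for K
      proof -
        have "K \<in> PS_carrier X" using K FP by blast
        then have "K \<subseteq> topspace X" unfolding PS_carrier_def using compactin_subset_topspace by blast
        moreover have "\<not> K \<subseteq> U" using nG K by blast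
        ultimately show ?thesis by blast
      qed
      from rudin[OF F(1) closedin_diff[OF closedin_topspace Q(3)] this]
      obtain C where C: "closedin X C" "C \<subseteq> topspace X - U" "\<forall>K\<in>\<F>. C \<inter> K \<noteq> {}"
        "irreducible_in X C" by blast
      have "x \<in> delta_cut X C"
        unfolding delta_cut_def lower_bounds_def
      proof (intro CollectI conjI ballI)
        show "x \<in> topspace X" by (rule x)
        fix y assume y: "y \<in> upper_bounds X C"
        have "y \<in> \<Inter>\<F>"
        proof
          fix G assume G: "G \<in> \<F>"
          have "C \<inter> G \<noteq> {}" using C(3) G by blast
          then obtain c where c1: "c \<in> C" and c2: "c \<in> G" by blast
          have cy: "spec_le X c y" using y c1 unfolding upper_bounds_def by simp
          have yt: "y \<in> topspace X" using y unfolding upper_bounds_def by simp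
          have GP: "G \<in> PS_carrier X" using G FP by blast
          show "y \<in> G" by (rule up_mem[OF GP c2 cy yt])
        qed
        then have "y \<in> up_set X {x}" using F(3) by simp
        then show "spec_le X x y" unfolding up_set_def by simp
      qed
      then have "F0 \<inter> X closure_of C \<noteq> {}" using F0(3) C(4) unfolding way_below_I2_def by simp
      moreover have "X closure_of C = C" using C(1) by (simp add: closure_of_eq)
      moreover have "F0 \<subseteq> U"
      proof -
        have "F0 \<subseteq> up_set X F0" by (rule up_set_sub[OF F0(2)])
        also have "\<dots> = Q" using F0(1) by simp
        finally show ?thesis using Q(2) by (rule order_trans)
      qed
      ultimately show False using C(2) by blast
    qed
    have "irreducible_in (PS X) (w_set X x)"
      unfolding irreducible_in_def
    proof (intro conjI allI impI)
      show "w_set X x \<noteq> {}" using Fne F(2) by blast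
      show "w_set X x \<subseteq> topspace (PS X)" using wP by (simp add: topspace_PS)
      fix G1 G2 assume H: "closedin (PS X) G1 \<and> closedin (PS X) G2 \<and> w_set X x \<subseteq> G1 \<union> G2"
      have gen: "w_set X x \<subseteq> G" if G: "closedin (PS X) G" "\<F> \<subseteq> G" for G
      proof
        fix Q assume Qw: "Q \<in> w_set X x"
        show "Q \<in> G"
        proof (rule ccontr)
          assume "Q \<notin> G"
          then have "Q \<in> topspace (PS X) - G" using Qw wP unfolding topspace_PS by blast
          moreover have "openin (PS X) (topspace (PS X) - G)" using G by auto
          ultimately obtain U where U: "openin X U" "Q \<in> box X U" "box X U \<subseteq> topspace (PS X) - G"
            using PS_basis[of X "topspace (PS X) - G" Q] by blast
          then obtain Gf where "Gf \<in> \<F>" "Gf \<subseteq> U" using key[OF Qw] unfolding box_def by blast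
          then have "Gf \<in> box X U" using FP unfolding box_def by auto
          then show False using U G \<open>Gf \<in> \<F>\<close> by blast
        qed
      qed
      have "\<F> \<subseteq> G1 \<or> \<F> \<subseteq> G2" using F(1) H F(2) unfolding irreducible_in_def by blast
      then show "w_set X x \<subseteq> G1 \<or> w_set X x \<subseteq> G2" using gen H by blast
    qed
    then show "irreducible_in (PS X) (w_set X x) \<and> up_set X {x} = \<Inter>(w_set X x)"
      using eq by blast
  qed
qed

end
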